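(* Let $\mathbb{X},\mathbb{Y}$ be finite-dimensional real Hilbert spaces, $f:\mathbb{X}\to(-\infty,\infty]$ and $g:\mathbb{Y}\to(-\infty,\infty]$ proper, convex and lower semicontinuous, $K:\mathbb{X}\to\mathbb{Y}$ linear, and $h:\mathbb{X}\to\mathbb{R}$ convex and differentiable with $\bar L$-Lipschitz gradient ($\bar L>0$). Let $(\tau_n)_{n\ge 0}$ be the primal stepsize sequence generated by the P-GRPDA algorithm described in the context, with parameters $\beta>0$, $\psi\in(1,\phi]$, $0<2\mu'<\mu<\psi/2$, $\tau_0>0$. Then $\tau_n\ge \eta:=\min\left\{\tau_0,\ \frac{\mu}{\sqrt{\beta}\|K\|},\ \frac{\mu'}{\bar L}\right\}$ for all $n$, and $\lim_{n\to\infty}\tau_n$ exists and satisfies $\lim_{n\to\infty}\tau_n\ge\eta>0$.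
   Context: $\phi=\frac{1+\sqrt5}{2}$; $\|K\|=\sup\{\|Kx\|:\|x\|=1\}$; $K^*$ is the adjoint of $K$; $g^*$ is the Fenchel conjugate of $g$; $\operatorname{prox}_{\lambda f}(x)=\arg\min_{u}\{f(u)+\frac{1}{2\lambda}\|u-x\|^2\}$. P-GRPDA: choose $x_0\in\mathbb{X}$, $y_0\in\mathbb{Y}$, set $z_0=x_0$, choose $\beta>0$, $\psi\in(1,\phi]$, $0<2\mu'<\mu<\psi/2$, $\tau_0>0$. For $n=1,2,\dots$: $z_n=\frac{\psi-1}{\psi}x_{n-1}+\frac1\psi z_{n-1}$; $x_n=\operatorname{prox}_{\tau_{n-1}f}\big(z_n-\tau_{n-1}K^*y_{n-1}-\tau_{n-1}\nabla h(x_{n-1})\big)$; $\tau_n=\min\left\{\tau_{n-1},\ \frac{\mu\|x_n-x_{n-1}\|}{\sqrt\beta\|Kx_n-Kx_{n-1}\|},\ \frac{\mu'\|x_n-x_{n-1}\|}{\|\nabla h(x_n)-\nabla h(x_{n-1})\|}\right\}$, $\sigma_n=\beta\tau_n$; $w_n=\operatorname{prox}_{\frac{1}{\sigma_n}g}\big(\frac{y_{n-1}}{\sigma_n}+Kx_n\big)$; $y_n=y_{n-1}+\sigma_n(Kx_n-w_n)$. Conventions in the $\tau_n$ update: $1/0=\infty$ (a term with zero denominator and nonzero numerator is ignored) and $0/0=\infty$ (so $\tau_n=\tau_{n-1}$ if $x_n=x_{n-1}$). *)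

theory Defs
  imports "HOL-Analysis.Analysis" "HOL-Library.Extended_Real"
begin

definition proper_fun :: "('a \<Rightarrow> ereal) \<Rightarrow> bool" where
  "proper_fun f \<longleftrightarrow> (\<forall>x. f x \<noteq> -\<infinity>) \<and> (\<exists>x. f x \<noteq> \<infinity>)"

definition convex_ext :: "('a::real_vector \<Rightarrow> ereal) \<Rightarrow> bool" where
  "convex_ext f \<longleftrightarrow> (\<forall>x y t. 0 < t \<and> t < 1 \<longrightarrow>
      f ((1 - t) *\<^sub>R x + t *\<^sub>R y) \<le> ereal (1 - t) * f x + ereal t * f y)"

definition lsc_ext :: "('a::topological_space \<Rightarrow> ereal) \<Rightarrow> bool" where
  "lsc_ext f \<longleftrightarrow> (\<forall>x X. X \<longlonglongrightarrow> x \<longrightarrow> f x \<le> liminf (\<lambda>n. f (X n)))"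

definition prox :: "real \<Rightarrow> ('a::real_normed_vector \<Rightarrow> ereal) \<Rightarrow> 'a \<Rightarrow> 'a" where
  "prox lam f x = (THE u. \<forall>v. f u + ereal (norm (u - x)^2 / (2 * lam))
                              \<le> f v + ereal (norm (v - x)^2 / (2 * lam)))"

definition ediv :: "real \<Rightarrow> real \<Rightarrow> ereal" where
  "ediv a b = (if b = 0 then \<infinity> else ereal (a / b))"

end

theory Submission
  imports Defs
begin


lemma aux_mid:
  fixes A B :: ereal
  assumes "ereal e \<le> ereal t" "ereal e \<le> A" "ereal e \<le> B"
  shows "e \<le> real_of_ereal (min (ereal t) (min A B)) \<and> real_of_ereal (min (ereal t) (min A B)) \<le> t"
proof -
  define m where "m = min (ereal t) (min A B)"
  have 1: "ereal e \<le> m" "m \<le> ereal t" using assms by (auto simp: m_def)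
  then obtain r where "m = ereal r" by (cases m) auto
  with 1 show ?thesis by (simp add: m_def[symmetric])
qed

lemma aux_eta:
  fixes E F :: ereal
  assumes "0 < t" "0 < E" "0 < F"
  shows "ereal (real_of_ereal (min (ereal t) (min E F))) = min (ereal t) (min E F)
     \<and> 0 < real_of_ereal (min (ereal t) (min E F))"
proof -
  define m where "m = min (ereal t) (min E F)"
  have 1: "0 < m" "m \<le> ereal t" using assms by (auto simp: m_def)
  then obtain r where "m = ereal r" by (cases m) auto
  with 1 show ?thesis by (simp add: m_def[symmetric])
qed

lemma ediv_pos: "0 < a \<Longrightarrow> 0 \<le> c \<Longrightarrow> 0 < ediv a c"
  by (auto simp: ediv_def)

lemma ediv_K:
  fixes K :: "'a::euclidean_space \<Rightarrow> 'b::euclidean_space"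
  assumes K: "linear K" and mu: "0 < mu" and b: "0 < b"
  shows "ediv mu (b * onorm K) \<le> ediv (mu * norm d) (b * norm (K d))"
proof (cases "K d = 0")
  case True then show ?thesis by (simp add: ediv_def)
next
  case False
  have bl: "bounded_linear K" using K by (simp add: linear_conv_bounded_linear)
  have le: "norm (K d) \<le> onorm K * norm d" by (rule onorm[OF bl])
  have d: "d \<noteq> 0" using False K linear_0 by auto
  have nd: "norm d > 0" "norm (K d) > 0" using d False by auto
  have op: "onorm K > 0"
    using le nd by (metis mult_eq_0_iff norm_ge_zero order_le_less order_less_le_trans onorm_pos_le[OF bl] not_less)
  have "mu / (b * onorm K) \<le> mu * norm d / (b * norm (K d))"
    using le nd op mu b by (simp add: divide_simps mult.commute mult.left_commute mult_left_mono)
  then show ?thesis using False op b by (simp add: ediv_def)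
qed

lemma ediv_g:
  assumes mu: "0 < mu" and L: "0 < L" and le: "ng \<le> L * nd" and ng: "0 \<le> ng"
  shows "ediv mu L \<le> ediv (mu * nd) ng"
proof (cases "ng = 0")
  case True then show ?thesis by (simp add: ediv_def)
next
  case False
  have "mu / L \<le> mu * nd / ng"
    using le ng False mu L by (simp add: divide_simps mult.commute mult.left_commute mult_left_mono)
  then show ?thesis using False L by (simp add: ediv_def)
qed

theorem proposition3p1:
  fixes f :: "'a::euclidean_space \<Rightarrow> ereal"
    and g :: "'b::euclidean_space \<Rightarrow> ereal"
    and K :: "'a \<Rightarrow> 'b"
    and h :: "'a \<Rightarrow> real" and gradh :: "'a \<Rightarrow> 'a"
    and L \<beta> \<psi> \<mu> \<mu>' :: real
    and x z :: "nat \<Rightarrow> 'a" and y w :: "nat \<Rightarrow> 'b" and \<tau> \<sigma> :: "nat \<Rightarrow> real"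
  assumes f: "proper_fun f" "convex_ext f" "lsc_ext f"
    and g: "proper_fun g" "convex_ext g" "lsc_ext g"
    and K: "linear K"
    and h_convex: "convex_on UNIV h"
    and h_grad: "\<And>u. (h has_derivative (\<lambda>v. gradh u \<bullet> v)) (at u)"
    and L_pos: "L > 0"
    and h_lip: "L-lipschitz_on UNIV gradh"
    and \<beta>: "\<beta> > 0"
    and \<psi>: "1 < \<psi>" "\<psi> \<le> (1 + sqrt 5) / 2"
    and \<mu>: "0 < 2 * \<mu>'" "2 * \<mu>' < \<mu>" "\<mu> < \<psi> / 2"
    and \<tau>0: "\<tau> 0 > 0"
    and z0: "z 0 = x 0"
    and z_upd: "\<And>n. n \<ge> 1 \<Longrightarrow> z n = ((\<psi> - 1) / \<psi>) *\<^sub>R x (n - 1) + (1 / \<psi>) *\<^sub>R z (n - 1)"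
    and x_upd: "\<And>n. n \<ge> 1 \<Longrightarrow> x n = prox (\<tau> (n - 1)) f
                  (z n - \<tau> (n - 1) *\<^sub>R adjoint K (y (n - 1)) - \<tau> (n - 1) *\<^sub>R gradh (x (n - 1)))"
    and \<tau>_upd: "\<And>n. n \<ge> 1 \<Longrightarrow> \<tau> n = real_of_ereal (min (ereal (\<tau> (n - 1)))
                  (min (ediv (\<mu> * norm (x n - x (n - 1))) (sqrt \<beta> * norm (K (x n) - K (x (n - 1)))))
                       (ediv (\<mu>' * norm (x n - x (n - 1))) (norm (gradh (x n) - gradh (x (n - 1)))))))"
    and \<sigma>_upd: "\<And>n. n \<ge> 1 \<Longrightarrow> \<sigma> n = \<beta> * \<tau> n"
    and w_upd: "\<And>n. n \<ge> 1 \<Longrightarrow> w n = prox (1 / \<sigma> n) g ((1 / \<sigma> n) *\<^sub>R y (n - 1) + K (x n))"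
    and y_upd: "\<And>n. n \<ge> 1 \<Longrightarrow> y n = y (n - 1) + \<sigma> n *\<^sub>R (K (x n) - w n)"
  shows "let \<eta> = real_of_ereal (min (ereal (\<tau> 0)) (min (ediv \<mu> (sqrt \<beta> * onorm K)) (ediv \<mu>' L)))
         in (\<forall>n. \<tau> n \<ge> \<eta>) \<and> convergent \<tau> \<and> lim \<tau> \<ge> \<eta> \<and> \<eta> > 0"
proof -
  define E where "E = ediv \<mu> (sqrt \<beta> * onorm K)"
  define F where "F = ediv \<mu>' L"
  define \<eta> where "\<eta> = real_of_ereal (min (ereal (\<tau> 0)) (min E F))"
  have mu: "0 < \<mu>" "0 < \<mu>'" using \<mu> by auto
  have bl: "bounded_linear K" using K by (simp add: linear_conv_bounded_linear)
  have Epos: "0 < E" unfolding E_def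
    by (rule ediv_pos[OF mu(1)]) (simp add: \<beta> onorm_pos_le[OF bl] less_imp_le)
  have Fpos: "0 < F" unfolding F_def by (rule ediv_pos[OF mu(2)]) (simp add: L_pos less_imp_le)
  from aux_eta[OF \<tau>0 Epos Fpos]
  have eta: "ereal \<eta> = min (ereal (\<tau> 0)) (min E F)" "0 < \<eta>" unfolding \<eta>_def by auto
  have step: "\<eta> \<le> \<tau> n \<and> \<tau> n \<le> \<tau> (n - 1)" if "n \<ge> 1" "\<eta> \<le> \<tau> (n - 1)" for n
  proof -
    have A: "E \<le> ediv (\<mu> * norm (x n - x (n - 1))) (sqrt \<beta> * norm (K (x n) - K (x (n - 1))))"
      unfolding E_def linear_diff[OF K, symmetric]
      by (rule ediv_K[OF K mu(1)]) (simp add: \<beta>)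
    have B: "F \<le> ediv (\<mu>' * norm (x n - x (n - 1))) (norm (gradh (x n) - gradh (x (n - 1))))"
      unfolding F_def
      by (rule ediv_g[OF mu(2) L_pos]) (use lipschitz_onD[OF h_lip] in \<open>auto simp: dist_norm\<close>)
    have e1: "ereal \<eta> \<le> E" "ereal \<eta> \<le> F" unfolding eta(1) by (simp_all add: min.coboundedI2)
    show ?thesis unfolding \<tau>_upd[OF that(1)]
      by (rule aux_mid) (use that(2) A B e1 in auto)
  qed
  have low: "\<eta> \<le> \<tau> n" for n
  proof (induction n)
    case 0 show ?case using eta(1) by (metis ereal_less_eq(3) min.cobounded1)
  next
    case (Suc n) then show ?case using step[of "Suc n"] by simp
  qed
  have dec: "decseq \<tau>"
    by (rule decseq_SucI) (use step low in \<open>metis diff_Suc_1 le_add1 plus_1_eq_Suc\<close>)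
  obtain l where l: "\<tau> \<longlonglongrightarrow> l" "\<forall>i. l \<le> \<tau> i" using decseq_convergent[OF dec, of \<eta>] low by auto
  have "\<eta> \<le> l" by (rule LIMSEQ_le_const[OF l(1)]) (use low in auto)
  then show ?thesis using l low eta(2) unfolding Let_def E_def[symmetric] F_def[symmetric] \<eta>_def[symmetric]
    by (auto simp: convergent_def limI)
qed

end
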